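(* Let $\mathcal G$ be a network with input nodes $\iota_1,\dots,\iota_n$ and output node $o$ such that $o$ is downstream from every input node. Suppose the Jacobian $J$ of the admissible vector field is generic and all its self-couplings $f_{\sigma,x_\sigma}$ are not identically zero. Then $\det\langle H\rangle$ is not identically zero.
   Context: Node $b$ is downstream from $a$ if there is a directed path from $a$ to $b$. An admissible vector field assigns a real variable $x_j$ to each node, with $\dot x_{\iota_m}=f_{\iota_m}(X,\mathcal I)$ for input nodes and $\dot x_j=f_j(X)$ otherwise ($\mathcal I\in\mathbb R$ a single input parameter), smooth, with $f_{\iota_m,\mathcal I}=\partial f_{\iota_m}/\partial\mathcal I\neq0$. Writing $f_{\sigma_i,\sigma_j}=\partial f_{\sigma_i}/\partial x_{\sigma_j}$, the vector field (or its Jacobian $J=(f_{\sigma_i,\sigma_j})$) is generic if (a) $f_{\sigma_i,\sigma_j}\equiv0$ if and only if there is no arrow $\sigma_j\to\sigma_i$, and (b) there is no polynomial relation among the $f_{\sigma_i,\sigma_j}$ (so they may be regarded as algebraically independent variables). The generalized homeostasis matrix $\langle H\rangle$ is obtained from $J$ (nodes ordered with $o$ last) by replacing the last column by the column with $-f_{\iota_m,\mathcal I}$ in row $\iota_m$ and $0$ elsewhere. *)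

theory Defs
  imports "HOL-Analysis.Analysis"
begin

text \<open>Network: nodes form a finite type 'n; E a b means there is an arrow a \<rightarrow> b.
  Node b is downstream from a iff there is a directed path from a to b.\<close>

definition downstream :: "('n \<Rightarrow> 'n \<Rightarrow> bool) \<Rightarrow> 'n \<Rightarrow> 'n \<Rightarrow> bool" where
  "downstream E b a \<longleftrightarrow> E\<^sup>*\<^sup>* a b"

text \<open>Generic Jacobian: entry (i,j) is the free variable v i j (standing for f_{i,j})
  if there is an arrow j \<rightarrow> i, or if i = j (self-couplings are not identically zero);
  it is identically zero otherwise.\<close>

definition generic_jacobian :: "('n::finite \<Rightarrow> 'n \<Rightarrow> bool) \<Rightarrow> ('n \<Rightarrow> 'n \<Rightarrow> real) \<Rightarrow> real^'n^'n" where
  "generic_jacobian E v = (\<chi> i j. if i = j \<or> E j i then v i j else 0)"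

text \<open>Generalized homeostasis matrix: column o of J replaced by the column with
  - f_{iota,I} (free variable c iota) in the input rows and 0 elsewhere.\<close>

definition gen_homeostasis_matrix ::
  "('n::finite \<Rightarrow> 'n \<Rightarrow> bool) \<Rightarrow> 'n set \<Rightarrow> 'n \<Rightarrow> ('n \<Rightarrow> 'n \<Rightarrow> real) \<Rightarrow> ('n \<Rightarrow> real) \<Rightarrow> real^'n^'n" where
  "gen_homeostasis_matrix E inputs out v c =
     (\<chi> i j. if j = out then (if i \<in> inputs then - c i else 0) else generic_jacobian E v $ i $ j)"

end

theory Submission
  imports Defs
begin

lemma path_perm:
  fixes E :: "'n::finite \<Rightarrow> 'n \<Rightarrow> bool"
  shows "\<And>a. (E ^^ n) a out \<Longrightarrow> (\<forall>m<n. \<not> (E ^^ m) a out) \<Longrightarrow>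
     \<exists>p. p permutes (UNIV::'n set) \<and> p a = out \<and> (\<forall>i. i \<noteq> a \<longrightarrow> p i = i \<or> E (p i) i)
       \<and> (\<forall>x. p x \<noteq> x \<longrightarrow> (\<exists>m\<le>n. (E ^^ m) x out))"
proof (induction n rule: less_induct)
  case (less n a)
  show ?case
  proof (cases n)
    case 0
    then have "a = out" using less.prems by simp
    then show ?thesis using 0 by (intro exI[of _ id]) (auto simp: permutes_id id_def[symmetric])
  next
    case (Suc k)
    obtain b where ab: "E a b" and bk: "(E ^^ k) b out"
      using less.prems(1) Suc relpowp_Suc_E2 by metis
    define k' where "k' = (LEAST m. (E ^^ m) b out)"
    have k'1: "(E ^^ k') b out" unfolding k'_def by (rule LeastI[of _ k], fact)
    have k'2: "k' \<le> k" unfolding k'_def by (rule Least_le, fact)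
    have k'3: "\<forall>m<k'. \<not> (E ^^ m) b out" unfolding k'_def using not_less_Least by blast
    obtain p where pp: "p permutes (UNIV::'n set)" and pb: "p b = out"
      and pi: "\<forall>i. i \<noteq> b \<longrightarrow> p i = i \<or> E (p i) i"
      and pm: "\<forall>x. p x \<noteq> x \<longrightarrow> (\<exists>m\<le>k'. (E ^^ m) x out)"
      using less.IH[of k' b] k'1 k'3 k'2 Suc by auto
    have pa: "p a = a"
    proof (rule ccontr)
      assume "p a \<noteq> a"
      then obtain m where "m \<le> k'" "(E ^^ m) a out" using pm by blast
      then show False using less.prems(2) k'2 Suc by auto
    qed
    have anb: "a \<noteq> b" using less.prems(2) bk Suc by auto
    define q where "q = p \<circ> Transposition.transpose a b"
    have qp: "q permutes (UNIV::'n set)" unfolding q_def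
      by (rule permutes_compose[OF permutes_swap_id pp]) auto
    have "(E ^^ Suc k) a out" using less.prems Suc by simp
    show ?thesis
    proof (intro exI[of _ q] conjI allI impI)
      show "q permutes UNIV" by (fact qp)
      show "q a = out" unfolding q_def using pb by simp
    next
      fix i assume "i \<noteq> a"
      then show "q i = i \<or> E (q i) i" unfolding q_def using pa pi ab
        by (cases "i = b") (auto simp: transpose_def)
    next
      fix x assume "q x \<noteq> x"
      show "\<exists>m\<le>n. (E ^^ m) x out"
      proof (cases "x = a \<or> x = b")
        case True
        then show ?thesis using less.prems(1) bk Suc by (metis le_SucI order_refl)
      next
        case False
        then have "p x \<noteq> x" using \<open>q x \<noteq> x\<close> unfolding q_def by (simp add: transpose_def)
        then obtain m where "m \<le> k'" "(E ^^ m) x out" using pm by blast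
        then show ?thesis using k'2 Suc by (intro exI[of _ m]) simp
      qed
    qed
  qed
qed

theorem propositionB3:
  fixes E :: "'n::finite \<Rightarrow> 'n \<Rightarrow> bool"
    and inputs :: "'n set" and out :: 'n
  assumes "inputs \<noteq> {}"
    and "\<forall>\<iota>\<in>inputs. downstream E out \<iota>"
  shows "\<not> (\<forall>v c. det (gen_homeostasis_matrix E inputs out v c) = 0)"
proof -
  obtain a where ain: "a \<in> inputs" using assms(1) by blast
  then have "E\<^sup>*\<^sup>* a out" using assms(2) unfolding downstream_def by blast
  then obtain n0 where "(E ^^ n0) a out" using rtranclp_power by metis
  define n where "n = (LEAST m. (E ^^ m) a out)"
  have n1: "(E ^^ n) a out" unfolding n_def by (rule LeastI, fact)
  have n2: "\<forall>m<n. \<not> (E ^^ m) a out" unfolding n_def using not_less_Least by blast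
  obtain p where pp: "p permutes (UNIV::'n set)" and pa: "p a = out"
    and pi: "\<forall>i. i \<noteq> a \<longrightarrow> p i = i \<or> E (p i) i"
    using path_perm[OF n1 n2] by blast
  define v :: "'n \<Rightarrow> 'n \<Rightarrow> real" where "v = (\<lambda>i j. if p i = j then 1 else 0)"
  define c :: "'n \<Rightarrow> real" where "c = (\<lambda>i. if i = a then -1 else 0)"
  have inj: "p i = p j \<longleftrightarrow> i = j" for i j using pp by (metis permutes_inj injD)
  have eq: "gen_homeostasis_matrix E inputs out v c = (\<chi> i. (mat 1 :: real^'n^'n) $ p i)"
  proof -
    have "gen_homeostasis_matrix E inputs out v c $ i $ j = (mat 1 :: real^'n^'n) $ p i $ j" for i j
    proof (cases "j = out")
      case True
      then show ?thesis using pa inj[of i a] ain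
        unfolding gen_homeostasis_matrix_def c_def mat_def by auto
    next
      case False
      then show ?thesis using pa pi
        unfolding gen_homeostasis_matrix_def generic_jacobian_def v_def mat_def by auto
    qed
    then show ?thesis by (simp add: vec_eq_iff)
  qed
  have "det (gen_homeostasis_matrix E inputs out v c) = of_int (sign p)"
    unfolding eq det_permute_rows[OF pp] by simp
  moreover have "(of_int (sign p) :: real) \<noteq> 0" by (simp add: sign_def)
  ultimately have "det (gen_homeostasis_matrix E inputs out v c) \<noteq> 0" by simp
  then show ?thesis by blast
qed

end
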